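(* Consider the second-order Kuramoto model with bonding force $$\dot\theta_i=\omega_i,\qquad \dot\omega_i=\frac{1}{N}\sum_{j=1}^N\big[\kappa_0\cos(\theta_j-\theta_i)+\kappa_1\big](\omega_j-\omega_i)+\frac{\kappa_2}{N}\sum_{j=1}^N\big[|\theta_j-\theta_i|-\theta^\infty_{ij}\big]\operatorname{sgn}(\theta_j-\theta_i),\quad i\in[N].$$ Suppose the initial data $(\Theta^0,W^0)=(\theta_1^0,\dots,\theta_N^0,\omega_1^0,\dots,\omega_N^0)$ and parameters satisfy $$(\Theta^0,W^0)\in\mathcal{S},\qquad \kappa_0\cos\mathcal{U}+\kappa_1>0,\qquad \kappa_2>0,$$ and for some $\tau\in(0,\infty]$ let $\{(\theta_i,\omega_i)\}$ be a solution on $[0,\tau)$ with these initial data. Then $(\Theta(t),W(t))\in\mathcal{S}$ for all $t\in[0,\tau)$.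
   Context: $N\ge2$, $[N]=\{1,\dots,N\}$, $\kappa_0,\kappa_1\ge0$, $\kappa_2>0$ constants; $[\theta^\infty_{ij}]$ real $N\times N$ matrix with $\theta^\infty_{ii}=0$, $\theta^\infty_{ij}=\theta^\infty_{ji}$; $\operatorname{sgn}$ is the sign function. Energy: $\mathcal{E}:=\frac12\sum_i|\omega_i|^2+\frac{\kappa_2}{4N}\sum_{i,j}(|\theta_j-\theta_i|-\theta^\infty_{ij})^2$, and $\mathcal{E}(0)$ its value at the initial data. Define $\mathcal{U}:=\max_{i\ne j}\theta^\infty_{ij}+\sqrt{2N\mathcal{E}(0)/\kappa_2}$ and $\mathcal{S}:=\{(\Theta,W)\in\mathbb{R}^{2N}: |\theta_i-\theta_j|<\mathcal{U}<\pi \text{ for all } i,j\in[N]\}$ (in particular membership requires $\mathcal{U}<\pi$). A solution means a smooth (classical $C^1$) solution. *)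

theory Defs
  imports "HOL-Analysis.Analysis"
begin

text \<open>Oscillators are indexed by a finite type 'n, with N = CARD('n).
  A state is a pair of functions Theta, W :: 'n => real.\<close>

definition energy :: "real \<Rightarrow> ('n::finite \<Rightarrow> 'n \<Rightarrow> real) \<Rightarrow> ('n \<Rightarrow> real) \<Rightarrow> ('n \<Rightarrow> real) \<Rightarrow> real" where
  "energy k2 thinf Th W =
     (1/2) * (\<Sum>i\<in>UNIV. (W i)\<^sup>2)
     + k2 / (4 * real CARD('n)) * (\<Sum>i\<in>UNIV. \<Sum>j\<in>UNIV. (\<bar>Th j - Th i\<bar> - thinf i j)\<^sup>2)"

definition Ucal :: "real \<Rightarrow> ('n::finite \<Rightarrow> 'n \<Rightarrow> real) \<Rightarrow> real \<Rightarrow> real" where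
  "Ucal k2 thinf E0 =
     Max {thinf i j | i j. i \<noteq> j} + sqrt (2 * real CARD('n) * E0 / k2)"

definition inS :: "real \<Rightarrow> ('n::finite \<Rightarrow> real) \<Rightarrow> bool" where
  "inS U Th \<longleftrightarrow> (\<forall>i j. \<bar>Th i - Th j\<bar> < U \<and> U < pi)"

definition is_solution ::
  "real \<Rightarrow> real \<Rightarrow> real \<Rightarrow> ('n::finite \<Rightarrow> 'n \<Rightarrow> real) \<Rightarrow> ereal
    \<Rightarrow> ('n \<Rightarrow> real \<Rightarrow> real) \<Rightarrow> ('n \<Rightarrow> real \<Rightarrow> real) \<Rightarrow> bool" where
  "is_solution k0 k1 k2 thinf tau th om \<longleftrightarrow>
     (\<forall>i. \<forall>t. 0 \<le> t \<and> ereal t < tau \<longrightarrow>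
        (th i has_real_derivative om i t) (at t within {s. 0 \<le> s \<and> ereal s < tau}) \<and>
        (om i has_real_derivative
            (1 / real CARD('n)) * (\<Sum>j\<in>UNIV. (k0 * cos (th j t - th i t) + k1) * (om j t - om i t))
          + (k2 / real CARD('n)) * (\<Sum>j\<in>UNIV. (\<bar>th j t - th i t\<bar> - thinf i j) * sgn (th j t - th i t)))
          (at t within {s. 0 \<le> s \<and> ereal s < tau}))"

end

theory Submission
  imports Defs
begin


lemma abs_rderiv:
  fixes x :: "real \<Rightarrow> real"
  assumes d: "(x has_real_derivative d) (at s within S)" and S: "S \<subseteq> {s..}"
  shows "((\<lambda>t. \<bar>x t\<bar>) has_real_derivative (if x s = 0 then \<bar>d\<bar> else sgn (x s) * d)) (at s within S)"
proof -
  have q: "((\<lambda>t. (x t - x s)/(t - s)) \<longlongrightarrow> d) (at s within S)"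
    using d has_field_derivative_iff by blast
  show ?thesis
  proof (cases "x s = 0")
    case True
    have "((\<lambda>t. \<bar>(x t - x s)/(t - s)\<bar>) \<longlongrightarrow> \<bar>d\<bar>) (at s within S)" using q by (rule tendsto_rabs)
    moreover have "eventually (\<lambda>t. \<bar>(x t - x s)/(t - s)\<bar> = (\<bar>x t\<bar> - \<bar>x s\<bar>)/(t - s)) (at s within S)"
      unfolding eventually_at_filter using S True
      by (intro always_eventually) (auto simp: abs_divide)
    ultimately have "((\<lambda>t. (\<bar>x t\<bar> - \<bar>x s\<bar>)/(t - s)) \<longlongrightarrow> \<bar>d\<bar>) (at s within S)"
      using tendsto_cong by fastforce
    then show ?thesis using True by (simp add: has_field_derivative_iff)
  next
    case False
    have c: "(x \<longlongrightarrow> x s) (at s within S)" using DERIV_continuous[OF d] continuous_within by blast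
    have "eventually (\<lambda>t. dist (x t) (x s) < \<bar>x s\<bar>) (at s within S)"
      using tendstoD[OF c, of "\<bar>x s\<bar>"] False by simp
    hence ev: "eventually (\<lambda>t. (\<bar>x t\<bar> - \<bar>x s\<bar>)/(t - s) = sgn (x s) * ((x t - x s)/(t - s))) (at s within S)"
    proof (rule eventually_mono)
      fix t assume "dist (x t) (x s) < \<bar>x s\<bar>"
      hence "\<bar>x t\<bar> = sgn (x s) * x t" "\<bar>x s\<bar> = sgn (x s) * x s"
        using False by (cases "x s > 0"; simp add: dist_real_def; linarith)+
      then show "(\<bar>x t\<bar> - \<bar>x s\<bar>)/(t - s) = sgn (x s) * ((x t - x s)/(t - s))"
        by (simp add: algebra_simps diff_divide_distrib)
    qed
    have "((\<lambda>t. sgn (x s) * ((x t - x s)/(t - s))) \<longlongrightarrow> sgn (x s) * d) (at s within S)"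
      using q by (rule tendsto_mult_left)
    hence "((\<lambda>t. (\<bar>x t\<bar> - \<bar>x s\<bar>)/(t - s)) \<longlongrightarrow> sgn (x s) * d) (at s within S)"
      by (subst tendsto_cong[OF ev])
    then show ?thesis using False by (simp add: has_field_derivative_iff)
  qed
qed

lemma darboux_right:
  fixes g g' :: "real \<Rightarrow> real"
  assumes sb: "s < b" and cont: "continuous_on {s..b} g"
    and der: "\<And>t. s < t \<Longrightarrow> t < b \<Longrightarrow> (g has_real_derivative g' t) (at t)"
    and d0: "(g has_real_derivative d) (at s within {s..b})"
    and lim: "(g' \<longlongrightarrow> L) (at_right s)"
  shows "d = L"
proof -
  have q: "((\<lambda>t. (g t - g s)/(t - s)) \<longlongrightarrow> d) (at_right s)"
    using d0 at_within_Icc_at_right[OF sb] has_field_derivative_iff by metis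
  have "((\<lambda>t. (g t - g s)/(t - s)) \<longlongrightarrow> L) (at_right s)"
  proof (rule tendstoI)
    fix e :: real assume e: "e > 0"
    from tendstoD[OF lim e] have "eventually (\<lambda>z. dist (g' z) L < e) (at_right s)" .
    then obtain c where c: "c > s" "\<And>z. s < z \<Longrightarrow> z < c \<Longrightarrow> dist (g' z) L < e"
      using eventually_at_right[of s "s+1"] by auto
    show "eventually (\<lambda>t. dist ((g t - g s)/(t - s)) L < e) (at_right s)"
      unfolding eventually_at_right[of s "s+1", simplified]
    proof (intro exI[of _ "min c b"] conjI allI impI)
      show "s < min c b" using c sb by simp
      fix t assume t: "s < t" "t < min c b"
      have "continuous_on {s..t} g" by (rule continuous_on_subset[OF cont]) (use t in auto)
      moreover have "\<And>z. s < z \<Longrightarrow> z < t \<Longrightarrow> g differentiable at z"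
        using der t real_differentiable_def by fastforce
      ultimately obtain l z where z: "s < z" "z < t" "(g has_real_derivative l) (at z)"
        "g t - g s = (t - s) * l" using MVT[OF t(1)] by blast
      have "l = g' z" using DERIV_unique[OF z(3) der[of z]] z t by simp
      then have "(g t - g s)/(t - s) = g' z" using z t by simp
      then show "dist ((g t - g s)/(t - s)) L < e" using c z t by simp
    qed
  qed
  then show "d = L" using tendsto_unique[OF trivial_limit_at_right_real] q by blast
qed

lemma rderiv_nonincr:
  fixes f :: "real \<Rightarrow> real"
  assumes ab: "a \<le> b" and cont: "continuous_on {a..b} f"
   and der: "\<And>s. a \<le> s \<Longrightarrow> s < b \<Longrightarrow> \<exists>d\<le>0. (f has_real_derivative d) (at s within {s..b})"
  shows "f b \<le> f a"
proof -
  have key: "f b - e * b \<le> f a - e * a" if e: "e > 0" for e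
  proof (rule ccontr)
    define g where "g t = f t - e * t" for t
    assume "\<not> ?thesis"
    hence gb: "g b > g a" unfolding g_def by simp
    define Z where "Z = {t \<in> {a..b}. g t \<le> g a}"
    have gc: "continuous_on {a..b} g" unfolding g_def by (intro continuous_intros cont)
    have "closed Z" unfolding Z_def
      by (rule continuous_on_closed_Collect_le[OF gc]) (auto intro: continuous_intros)
    moreover have "a \<in> Z" using ab unfolding Z_def by auto
    moreover have "bdd_above Z" unfolding Z_def by (rule bdd_aboveI[of _ b]) auto
    ultimately have cZ: "Sup Z \<in> Z" by (intro closed_contains_Sup) auto
    define c where "c = Sup Z"
    have "c \<le> b" "g c \<le> g a" using cZ unfolding Z_def c_def by auto
    hence cb: "c < b" using gb by (cases "c = b") auto
    have ca: "a \<le> c" using cZ unfolding Z_def c_def by auto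
    obtain d where d: "d \<le> 0" "(f has_real_derivative d) (at c within {c..b})" using der ca cb by blast
    have "(g has_real_derivative d - e) (at c within {c..b})"
      unfolding g_def by (auto intro!: derivative_eq_intros d)
    hence "((\<lambda>t. (g t - g c)/(t - c)) \<longlongrightarrow> d - e) (at_right c)"
      using at_within_Icc_at_right[OF cb] has_field_derivative_iff by metis
    hence "eventually (\<lambda>t. (g t - g c)/(t - c) < 0) (at_right c)"
      using d e by (intro order_tendstoD) auto
    then obtain r where r: "r > c" "\<And>t. c < t \<Longrightarrow> t < r \<Longrightarrow> (g t - g c)/(t - c) < 0"
      using eventually_at_right[of c "c+1"] by auto
    define t where "t = (c + min r b)/2"
    have t: "c < t" "t < r" "t < b" using r cb unfolding t_def by auto
    have "g t < g c" using r(2)[OF t(1,2)] t by (simp add: divide_less_0_iff)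
    also have "g c \<le> g a" using cZ unfolding Z_def c_def by auto
    finally have "t \<in> Z" unfolding Z_def using t ca by auto
    hence "t \<le> c" unfolding c_def using \<open>bdd_above Z\<close> by (rule cSup_upper)
    with t show False by simp
  qed
  show ?thesis
  proof (rule field_le_epsilon)
    fix e :: real assume e: "0 < e"
    define e1 where "e1 = e / (b - a + 1)"
    have e1: "e1 > 0" using e ab unfolding e1_def by auto
    have "e1 * (b - a) \<le> e" unfolding e1_def using e ab by (simp add: field_simps)
    with key[OF e1] show "f b \<le> f a + e" by (simp add: algebra_simps)
  qed
qed

lemma antisym_sum:
  fixes h :: "'n::finite \<Rightarrow> 'n \<Rightarrow> real"
  assumes "\<And>i j. h j i = - h i j"
  shows "(\<Sum>i\<in>UNIV. \<Sum>j\<in>UNIV. w i * h i j) = -(1/2) * (\<Sum>i\<in>UNIV. \<Sum>j\<in>UNIV. h i j * (w j - w i))"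
proof -
  have "(\<Sum>i\<in>UNIV. \<Sum>j\<in>UNIV. h i j * w j) = (\<Sum>j\<in>UNIV. \<Sum>i\<in>UNIV. h i j * w j)"
    by (rule sum.swap)
  also have "\<dots> = (\<Sum>j\<in>UNIV. \<Sum>i\<in>UNIV. - (w j * h j i))"
    apply (intro sum.cong refl)
    subgoal for j i using assms[of i j] by (simp add: mult.commute)
    done
  also have "\<dots> = - (\<Sum>j\<in>UNIV. \<Sum>i\<in>UNIV. w j * h j i)"
    by (simp only: sum_negf)
  finally have 1: "(\<Sum>i\<in>UNIV. \<Sum>j\<in>UNIV. h i j * w j) = - (\<Sum>i\<in>UNIV. \<Sum>j\<in>UNIV. w i * h i j)" .
  have "(\<Sum>i\<in>UNIV. \<Sum>j\<in>UNIV. h i j * (w j - w i)) =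
      (\<Sum>i\<in>UNIV. \<Sum>j\<in>UNIV. h i j * w j) - (\<Sum>i\<in>UNIV. \<Sum>j\<in>UNIV. w i * h i j)"
    by (simp only: right_diff_distrib sum_subtractf mult.commute)
  with 1 show ?thesis by simp
qed


lemma sgn_right:
  fixes x :: "real \<Rightarrow> real"
  assumes d: "(x has_real_derivative w) (at_right s)"
  shows "eventually (\<lambda>t. sgn (x t) * w = sgn (x s) * w + (if x s = 0 then \<bar>w\<bar> else 0)) (at_right s)"
proof (cases "w = 0")
  case True then show ?thesis by simp
next
  case w: False
  show ?thesis
  proof (cases "x s = 0")
    case False
    have c: "(x \<longlongrightarrow> x s) (at_right s)" using DERIV_continuous[OF d] continuous_within by blast
    have "eventually (\<lambda>t. dist (x t) (x s) < \<bar>x s\<bar>) (at_right s)"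
      using tendstoD[OF c, of "\<bar>x s\<bar>"] False by simp
    then show ?thesis
    proof (rule eventually_mono)
      fix t assume "dist (x t) (x s) < \<bar>x s\<bar>"
      hence "sgn (x t) = sgn (x s)"
        using False by (cases "x s > 0"; simp add: dist_real_def sgn_if; linarith)
      then show "sgn (x t) * w = sgn (x s) * w + (if x s = 0 then \<bar>w\<bar> else 0)" using False by simp
    qed
  next
    case True
    have q: "((\<lambda>t. (x t - x s)/(t - s)) \<longlongrightarrow> w) (at_right s)"
      using d has_field_derivative_iff by blast
    have "eventually (\<lambda>t. dist ((x t - x s)/(t - s)) w < \<bar>w\<bar>) (at_right s)"
      using tendstoD[OF q, of "\<bar>w\<bar>"] w by simp
    moreover have "eventually (\<lambda>t. s < t) (at_right s)" by (rule eventually_at_right_less)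
    ultimately show ?thesis
    proof (rule eventually_elim2)
      fix t assume h: "dist ((x t - x s)/(t - s)) w < \<bar>w\<bar>" and st: "s < t"
      have hq: "- \<bar>w\<bar> < x t/(t - s) - w \<and> x t/(t - s) - w < \<bar>w\<bar>"
        using h True by (simp add: dist_real_def abs_less_iff)
      have ts: "t - s > 0" using st by simp
      show "sgn (x t) * w = sgn (x s) * w + (if x s = 0 then \<bar>w\<bar> else 0)"
      proof (cases "w > 0")
        case True
        hence "x t/(t - s) > 0" using hq by simp
        hence "x t > 0" using ts by (simp add: zero_less_divide_iff)
        then show ?thesis using True \<open>x s = 0\<close> by simp
      next
        case False
        hence wn: "w < 0" using w by simp
        hence "x t/(t - s) < 0" using hq by simp
        hence "x t < 0" using ts by (simp add: divide_less_0_iff)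
        then show ?thesis using wn \<open>x s = 0\<close> by simp
      qed
    qed
  qed
qed

lemma deriv_unique_right:
  fixes f :: "real \<Rightarrow> real"
  assumes "s < b" "(f has_real_derivative d1) (at s within {s..b})" "(f has_real_derivative d2) (at s within {s..b})"
  shows "d1 = d2"
proof -
  have "((\<lambda>y. (f y - f s) / (y - s)) \<longlongrightarrow> d1) (at_right s)"
    using assms(2) unfolding has_field_derivative_iff at_within_Icc_at_right[OF assms(1)] .
  moreover have "((\<lambda>y. (f y - f s) / (y - s)) \<longlongrightarrow> d2) (at_right s)"
    using assms(3) unfolding has_field_derivative_iff at_within_Icc_at_right[OF assms(1)] .
  ultimately show ?thesis by (rule tendsto_unique[OF trivial_limit_at_right_real])
qed



locale kur =
  fixes k0 k1 k2 :: real and thinf :: "'n::finite \<Rightarrow> 'n \<Rightarrow> real" and tau :: ereal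
    and th om :: "'n \<Rightarrow> real \<Rightarrow> real"
  assumes k2: "k2 > 0" and symm: "\<And>i j. thinf i j = thinf j i"
    and sol: "is_solution k0 k1 k2 thinf tau th om"
begin

definition Iv where "Iv = {t. 0 \<le> t \<and> ereal t < tau}"
definition NN where "NN = real CARD('n)"
definition Fo where "Fo i t = (1 / NN) * (\<Sum>j\<in>UNIV. (k0 * cos (th j t - th i t) + k1) * (om j t - om i t))
   + (k2 / NN) * (\<Sum>j\<in>UNIV. (\<bar>th j t - th i t\<bar> - thinf i j) * sgn (th j t - th i t))"
definition En where "En t = energy k2 thinf (\<lambda>i. th i t) (\<lambda>i. om i t)"
definition Dis where "Dis t = (1 / (2 * NN)) *
   (\<Sum>i\<in>UNIV. \<Sum>j\<in>UNIV. (k0 * cos (th j t - th i t) + k1) * (om j t - om i t)^2)"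

lemma NN_pos: "NN > 0"
  unfolding NN_def by simp

lemma dth: "t \<in> Iv \<Longrightarrow> (th i has_real_derivative om i t) (at t within Iv)"
  using sol unfolding is_solution_def Iv_def by auto

lemma dom: "t \<in> Iv \<Longrightarrow> (om i has_real_derivative Fo i t) (at t within Iv)"
  using sol unfolding is_solution_def Iv_def Fo_def NN_def by auto

lemma ere: "x \<le> b \<Longrightarrow> ereal b < tau \<Longrightarrow> ereal x < tau"
  by (metis ereal_less_eq(3) order.strict_trans1)

lemma sub: "s \<in> Iv \<Longrightarrow> ereal b < tau \<Longrightarrow> {s..b} \<subseteq> Iv"
  unfolding Iv_def by (auto intro: ere)

lemma at_int: "s \<in> Iv \<Longrightarrow> ereal b < tau \<Longrightarrow> s < t \<Longrightarrow> t < b \<Longrightarrow> at t within Iv = at t"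
  by (rule at_within_open_subset[of t "{s<..<b}"]) (auto simp: Iv_def intro: ere[of _ b] less_imp_le)

lemma cont_th: "S \<subseteq> Iv \<Longrightarrow> continuous_on S (th i)"
proof -
  have "continuous_on Iv (th i)"
    using dth DERIV_continuous continuous_on_eq_continuous_within by blast
  then show "S \<subseteq> Iv \<Longrightarrow> continuous_on S (th i)" using continuous_on_subset by blast
qed

lemma cont_om: "S \<subseteq> Iv \<Longrightarrow> continuous_on S (om i)"
proof -
  have "continuous_on Iv (om i)"
    using dom DERIV_continuous continuous_on_eq_continuous_within by blast
  then show "S \<subseteq> Iv \<Longrightarrow> continuous_on S (om i)" using continuous_on_subset by blast
qed

lemma lim_th: "S \<subseteq> Iv \<Longrightarrow> s \<in> S \<Longrightarrow> (th i \<longlongrightarrow> th i s) (at s within S)"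
  using cont_th continuous_on_def by blast

lemma lim_om: "S \<subseteq> Iv \<Longrightarrow> s \<in> S \<Longrightarrow> (om i \<longlongrightarrow> om i s) (at s within S)"
  using cont_om continuous_on_def by blast

lemma sgn_swap: "sgn (a - b) = - sgn (b - (a::real))"
  by (metis minus_diff_eq sgn_minus)

lemma sgn_abs_id: "(\<bar>x\<bar> - c) * sgn x = x - c * sgn (x::real)"
  by (cases "x > 0"; cases "x = 0") auto

lemma J_zero:
  assumes s: "s \<in> Iv" and sb: "s < b" and b: "ereal b < tau"
  shows "(\<Sum>i\<in>UNIV. \<Sum>j\<in>UNIV. if th j s - th i s = 0 then thinf i j * \<bar>om j s - om i s\<bar> else 0) = 0"
    (is "?J = 0")
proof -
  define g where "g t = (\<Sum>i\<in>UNIV. om i s * om i t)" for t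
  define g' where "g' t = (\<Sum>i\<in>UNIV. om i s * Fo i t)" for t
  define P where "P t = (\<Sum>i\<in>UNIV. om i s * ((1 / NN) * (\<Sum>j\<in>UNIV. (k0 * cos (th j t - th i t) + k1) * (om j t - om i t))
      + (k2 / NN) * (\<Sum>j\<in>UNIV. th j t - th i t)))" for t
  define Q where "Q t = (\<Sum>i\<in>UNIV. \<Sum>j\<in>UNIV. thinf i j * (sgn (th j t - th i t) * (om j s - om i s)))" for t
  have SI: "{s..b} \<subseteq> Iv" using sub[OF s b] .
  have gP: "g' t = P t + (k2 / (2 * NN)) * Q t" for t
  proof -
    have hanti: "thinf j i * sgn (th i t - th j t) = - (thinf i j * sgn (th j t - th i t))" for i j
      using symm[of j i] sgn_swap[of "th i t" "th j t"] by simp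
    have anti: "(\<Sum>i\<in>UNIV. \<Sum>j\<in>UNIV. om i s * (thinf i j * sgn (th j t - th i t)))
        = -(1/2) * Q t"
      unfolding Q_def
      by (subst antisym_sum[where h="\<lambda>i j. thinf i j * sgn (th j t - th i t)"])
         (rule hanti, simp only: mult.assoc)
    have Fo_eq: "Fo i t = ((1 / NN) * (\<Sum>j\<in>UNIV. (k0 * cos (th j t - th i t) + k1) * (om j t - om i t))
      + (k2 / NN) * (\<Sum>j\<in>UNIV. th j t - th i t)) - (k2 / NN) * (\<Sum>j\<in>UNIV. thinf i j * sgn (th j t - th i t))" for i
      unfolding Fo_def sgn_abs_id sum_subtractf right_diff_distrib by simp
    have "g' t = (\<Sum>i\<in>UNIV. om i s * ((1 / NN) * (\<Sum>j\<in>UNIV. (k0 * cos (th j t - th i t) + k1) * (om j t - om i t))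
      + (k2 / NN) * (\<Sum>j\<in>UNIV. th j t - th i t))) - (\<Sum>i\<in>UNIV. om i s * ((k2 / NN) * (\<Sum>j\<in>UNIV. thinf i j * sgn (th j t - th i t))))"
      unfolding g'_def Fo_eq right_diff_distrib sum_subtractf ..
    also have "(\<Sum>i\<in>UNIV. om i s * ((k2 / NN) * (\<Sum>j\<in>UNIV. thinf i j * sgn (th j t - th i t))))
       = (k2 / NN) * (\<Sum>i\<in>UNIV. \<Sum>j\<in>UNIV. om i s * (thinf i j * sgn (th j t - th i t)))"
      by (simp only: sum_distrib_left mult.left_commute)
    finally have "g' t = P t - (k2 / NN) * (-(1/2) * Q t)" unfolding anti P_def .
    also have "\<dots> = P t + (k2 / (2 * NN)) * Q t" by simp
    finally show ?thesis .
  qed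
  have gder: "(g has_real_derivative g' t) (at t within Iv)" if "t \<in> Iv" for t
    unfolding g_def g'_def by (intro DERIV_sum DERIV_cmult dom that)
  have gcont: "continuous_on {s..b} g"
    unfolding g_def by (intro continuous_intros cont_om SI)
  have gint: "(g has_real_derivative g' t) (at t)" if "s < t" "t < b" for t
  proof -
    have "t \<in> Iv" using SI that by auto
    then show ?thesis using gder at_int[OF s b that] by metis
  qed
  have g0: "(g has_real_derivative g' s) (at s within {s..b})"
    using gder[OF s] SI by (rule DERIV_subset)
  have AR: "at_right s = at s within {s..b}" using at_within_Icc_at_right[OF sb] by simp
  have Plim: "(P \<longlongrightarrow> P s) (at_right s)"
    unfolding AR P_def using sb
    by (intro tendsto_intros lim_th lim_om SI) auto
  have ev: "eventually (\<lambda>t. sgn (th j t - th i t) * (om j s - om i s) =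
      sgn (th j s - th i s) * (om j s - om i s) + (if th j s - th i s = 0 then \<bar>om j s - om i s\<bar> else 0)) (at_right s)"
    for i j
  proof (rule sgn_right[where x="\<lambda>t. th j t - th i t"])
    have "((\<lambda>t. th j t - th i t) has_real_derivative om j s - om i s) (at s within Iv)"
      by (intro DERIV_diff dth s)
    then have "((\<lambda>t. th j t - th i t) has_real_derivative om j s - om i s) (at s within {s..b})"
      using SI by (rule DERIV_subset)
    then show "((\<lambda>t. th j t - th i t) has_real_derivative om j s - om i s) (at_right s)"
      using AR by simp
  qed
  have evQ: "eventually (\<lambda>t. Q t = Q s + ?J) (at_right s)"
  proof -
    have "eventually (\<lambda>t. \<forall>i j. sgn (th j t - th i t) * (om j s - om i s) =
      sgn (th j s - th i s) * (om j s - om i s) + (if th j s - th i s = 0 then \<bar>om j s - om i s\<bar> else 0)) (at_right s)"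
      using ev by (simp add: eventually_all_finite)
    then show ?thesis
    proof (rule eventually_mono)
      fix t assume h: "\<forall>i j. sgn (th j t - th i t) * (om j s - om i s) =
        sgn (th j s - th i s) * (om j s - om i s) + (if th j s - th i s = 0 then \<bar>om j s - om i s\<bar> else 0)"
      have "Q t = (\<Sum>i\<in>UNIV. \<Sum>j\<in>UNIV. thinf i j * (sgn (th j s - th i s) * (om j s - om i s))
          + (if th j s - th i s = 0 then thinf i j * \<bar>om j s - om i s\<bar> else 0))"
        unfolding Q_def using h by (intro sum.cong refl) (simp add: distrib_left)
      also have "\<dots> = Q s + ?J" unfolding Q_def by (simp add: sum.distrib)
      finally show "Q t = Q s + ?J" .
    qed
  qed
  have "((\<lambda>t. P t + (k2 / (2 * NN)) * (Q s + ?J)) \<longlongrightarrow> P s + (k2 / (2 * NN)) * (Q s + ?J)) (at_right s)"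
    by (intro tendsto_intros Plim)
  moreover have "eventually (\<lambda>t. P t + (k2 / (2 * NN)) * (Q s + ?J) = g' t) (at_right s)"
    using evQ by eventually_elim (simp add: gP)
  ultimately have "(g' \<longlongrightarrow> P s + (k2 / (2 * NN)) * (Q s + ?J)) (at_right s)"
    by (rule Lim_transform_eventually)
  then have "g' s = P s + (k2 / (2 * NN)) * (Q s + ?J)"
    using darboux_right[OF sb gcont, of g', OF gint g0] by blast
  then have "(k2 / (2 * NN)) * ?J = 0" by (simp add: gP algebra_simps)
  then show ?thesis using k2 NN_pos by simp
qed


lemma sq_deriv:
  fixes f :: "real \<Rightarrow> real"
  assumes "(f has_real_derivative d) (at x within S)"
  shows "((\<lambda>t. (f t)^2) has_real_derivative 2 * f x * d) (at x within S)"
proof -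
  have "((\<lambda>t. f t * f t) has_real_derivative d * f x + d * f x) (at x within S)"
    by (rule DERIV_mult[OF assms assms])
  moreover have "d * f x + d * f x = 2 * f x * d" by simp
  moreover have "(\<lambda>t. (f t)^2) = (\<lambda>t. f t * f t)" by (simp add: power2_eq_square)
  ultimately show ?thesis by simp
qed

lemma En_deriv:
  assumes s: "s \<in> Iv" and sb: "s < b" and b: "ereal b < tau"
  shows "(En has_real_derivative - Dis s) (at s within {s..b})"
proof -
  have SI: "{s..b} \<subseteq> Iv" using sub[OF s b] .
  have dth': "(th i has_real_derivative om i s) (at s within {s..b})" for i
    using dth[OF s] SI by (rule DERIV_subset)
  have dom': "(om i has_real_derivative Fo i s) (at s within {s..b})" for i
    using dom[OF s] SI by (rule DERIV_subset)
  define w where "w i j = om j s - om i s" for i j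
  define x where "x i j = th j s - th i s" for i j
  define a where "a i j = k0 * cos (x i j) + k1" for i j
  define T where "T i j = (\<bar>x i j\<bar> - thinf i j) * sgn (x i j)" for i j
  define rho where "rho i j = (if x i j = 0 then \<bar>w i j\<bar> else sgn (x i j) * w i j)" for i j
  have dabs: "((\<lambda>t. \<bar>th j t - th i t\<bar>) has_real_derivative rho i j) (at s within {s..b})" for i j
    unfolding rho_def x_def w_def by (rule abs_rderiv[OF DERIV_diff[OF dth' dth']]) auto
  have dabs2: "((\<lambda>t. \<bar>th j t - th i t\<bar> - thinf i j) has_real_derivative rho i j) (at s within {s..b})" for i j
    using DERIV_diff[OF dabs DERIV_const] by simp
  define V where "V = (1/2) * (\<Sum>i\<in>UNIV. 2 * om i s * Fo i s)
      + k2 / (4 * NN) * (\<Sum>i\<in>UNIV. \<Sum>j\<in>UNIV. 2 * (\<bar>x i j\<bar> - thinf i j) * rho i j)"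
  have "(En has_real_derivative V) (at s within {s..b})"
    unfolding En_def energy_def V_def NN_def x_def
    by (intro DERIV_add DERIV_cmult DERIV_sum sq_deriv dom' dabs2)
  moreover have "V = - Dis s"
  proof -
    have Fo_s: "Fo i s = (1 / NN) * (\<Sum>j\<in>UNIV. a i j * w i j) + (k2 / NN) * (\<Sum>j\<in>UNIV. T i j)" for i
      unfolding Fo_def a_def w_def T_def x_def ..
    have antia: "a j i * w j i = - (a i j * w i j)" for i j
    proof -
      have "cos (th i s - th j s) = cos (th j s - th i s)" by (metis cos_minus minus_diff_eq)
      then show ?thesis unfolding a_def w_def x_def by (simp add: algebra_simps)
    qed
    have antiT: "T j i = - T i j" for i j
      unfolding T_def x_def using symm[of j i] sgn_swap[of "th i s" "th j s"]
      by (simp add: abs_minus_commute[of "th i s"])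
    have 1: "(\<Sum>i\<in>UNIV. om i s * Fo i s) = (1 / NN) * (\<Sum>i\<in>UNIV. \<Sum>j\<in>UNIV. om i s * (a i j * w i j))
        + (k2 / NN) * (\<Sum>i\<in>UNIV. \<Sum>j\<in>UNIV. om i s * T i j)"
      unfolding Fo_s by (simp add: distrib_left sum.distrib sum_distrib_left mult.left_commute)
    have 2: "(\<Sum>i\<in>UNIV. \<Sum>j\<in>UNIV. om i s * (a i j * w i j)) = -(1/2) * (\<Sum>i\<in>UNIV. \<Sum>j\<in>UNIV. a i j * w i j * w i j)"
      using antisym_sum[of "\<lambda>i j. a i j * w i j", OF antia, of "\<lambda>i. om i s"] by (simp add: w_def)
    have 3: "(\<Sum>i\<in>UNIV. \<Sum>j\<in>UNIV. om i s * T i j) = -(1/2) * (\<Sum>i\<in>UNIV. \<Sum>j\<in>UNIV. T i j * w i j)"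
      using antisym_sum[of T, OF antiT, of "\<lambda>i. om i s"] by (simp add: w_def)
    have pt: "(\<bar>x i j\<bar> - thinf i j) * rho i j = T i j * w i j - (if x i j = 0 then thinf i j * \<bar>w i j\<bar> else 0)" for i j
      unfolding rho_def T_def by auto
    have J: "(\<Sum>i\<in>UNIV. \<Sum>j\<in>UNIV. if x i j = 0 then thinf i j * \<bar>w i j\<bar> else 0) = 0"
      unfolding x_def w_def using J_zero[OF s sb b] .
    have 4: "(\<Sum>i\<in>UNIV. \<Sum>j\<in>UNIV. (\<bar>x i j\<bar> - thinf i j) * rho i j) = (\<Sum>i\<in>UNIV. \<Sum>j\<in>UNIV. T i j * w i j)"
      unfolding pt sum_subtractf J by simp
    have D: "Dis s = (1 / (2 * NN)) * (\<Sum>i\<in>UNIV. \<Sum>j\<in>UNIV. a i j * w i j * w i j)"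
      unfolding Dis_def a_def w_def x_def by (simp add: power2_eq_square mult.assoc)
    have "V = (\<Sum>i\<in>UNIV. om i s * Fo i s) + k2 / (2 * NN) * (\<Sum>i\<in>UNIV. \<Sum>j\<in>UNIV. (\<bar>x i j\<bar> - thinf i j) * rho i j)"
    proof -
      have e1: "(\<Sum>i\<in>UNIV. \<Sum>j\<in>UNIV. 2 * (\<bar>x i j\<bar> - thinf i j) * rho i j) = 2 * (\<Sum>i\<in>UNIV. \<Sum>j\<in>UNIV. (\<bar>x i j\<bar> - thinf i j) * rho i j)"
        by (simp only: sum_distrib_left mult.assoc)
      have e2: "(\<Sum>i\<in>UNIV. 2 * om i s * Fo i s) = 2 * (\<Sum>i\<in>UNIV. om i s * Fo i s)"
        by (simp add: sum_distrib_left mult.assoc)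
      show ?thesis unfolding V_def e1 e2 using NN_pos by (simp add: field_simps)
    qed
    also have "\<dots> = - Dis s" unfolding 1 2 3 4 D by (simp add: field_simps)
    finally show ?thesis .
  qed
  ultimately show ?thesis by simp
qed

end


theorem lemma3p1:
  fixes k0 k1 k2 :: real
    and thinf :: "'n::finite \<Rightarrow> 'n \<Rightarrow> real"
    and tau :: ereal
    and th om :: "'n \<Rightarrow> real \<Rightarrow> real"
  assumes N2: "CARD('n) \<ge> 2"
    and k0: "k0 \<ge> 0" and k1: "k1 \<ge> 0" and k2: "k2 > 0"
    and diag: "\<And>i. thinf i i = 0"
    and symm: "\<And>i j. thinf i j = thinf j i"
    and tau: "tau > 0"
    and sol: "is_solution k0 k1 k2 thinf tau th om"
    and init: "inS (Ucal k2 thinf (energy k2 thinf (\<lambda>i. th i 0) (\<lambda>i. om i 0))) (\<lambda>i. th i 0)"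
    and coupl: "k0 * cos (Ucal k2 thinf (energy k2 thinf (\<lambda>i. th i 0) (\<lambda>i. om i 0))) + k1 > 0"
  shows "\<forall>t. 0 \<le> t \<and> ereal t < tau \<longrightarrow>
           inS (Ucal k2 thinf (energy k2 thinf (\<lambda>i. th i 0) (\<lambda>i. om i 0))) (\<lambda>i. th i t)"
proof -
  interpret kur k0 k1 k2 thinf tau th om
    using k2 symm sol by unfold_locales auto
  define E0 where "E0 = energy k2 thinf (\<lambda>i. th i 0) (\<lambda>i. om i 0)"
  define U where "U = Ucal k2 thinf E0"
  have E0: "E0 = En 0" unfolding E0_def En_def ..
  have Upi: "U < pi" and g0: "\<And>i j. \<bar>th i 0 - th j 0\<bar> < U"
    using init unfolding inS_def U_def E0_def by auto
  have cpl: "k0 * cos U + k1 > 0" using coupl unfolding U_def E0_def .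
  have U0: "U > 0" using g0[of undefined undefined] by simp
  have main: "\<forall>t. 0 \<le> t \<and> ereal t < tau \<longrightarrow> inS U (\<lambda>i. th i t)"
  proof (rule ccontr)
    assume "\<not> (\<forall>t. 0 \<le> t \<and> ereal t < tau \<longrightarrow> inS U (\<lambda>i. th i t))"
    then obtain t1 where t1: "0 \<le> t1" "ereal t1 < tau" and nt1: "\<not> inS U (\<lambda>i. th i t1)" by auto
    then obtain k1' l1' where kl1: "U \<le> \<bar>th k1' t1 - th l1' t1\<bar>"
      using Upi unfolding inS_def by (auto simp: not_less)
    define B where "B = {t \<in> {0..t1}. \<exists>k l. U \<le> \<bar>th k t - th l t\<bar>}"
    have B_eq: "B = (\<Union>k\<in>UNIV. \<Union>l\<in>UNIV. {t \<in> {0..t1}. U \<le> \<bar>th k t - th l t\<bar>})"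
      unfolding B_def by auto
    have SI1: "{0..t1} \<subseteq> Iv" unfolding Iv_def using t1 ere by auto
    have "closed B" unfolding B_eq
      by (intro closed_UN finite_UNIV ballI continuous_on_closed_Collect_le continuous_intros cont_th SI1 closed_atLeastAtMost) auto
    moreover have "t1 \<in> B" unfolding B_def using t1 kl1 by auto
    moreover have bdd: "bdd_below B" unfolding B_def by (rule bdd_belowI[of _ 0]) auto
    ultimately have TB: "Inf B \<in> B" by (intro closed_contains_Inf) auto
    define T where "T = Inf B"
    have T0: "0 \<le> T" "T \<le> t1" using TB unfolding T_def B_def by auto
    have bT: "ereal T < tau" using ere[OF T0(2) t1(2)] .
    have TIv: "T \<in> Iv" unfolding Iv_def using T0 bT by auto
    have good: "\<bar>th i s - th j s\<bar> < U" if s: "0 \<le> s" "s < T" for s i j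
    proof (rule ccontr)
      assume "\<not> ?thesis"
      hence "s \<in> B" unfolding B_def using s T0 by (auto simp: not_less)
      hence "T \<le> s" unfolding T_def using bdd by (rule cInf_lower)
      with s show False by simp
    qed
    obtain k l where kl: "U \<le> \<bar>th k T - th l T\<bar>" using TB unfolding T_def B_def by auto
    have Tpos: "T > 0"
    proof (rule ccontr)
      assume "\<not> T > 0" hence "T = 0" using T0 by simp
      with kl g0[of k l] show False by simp
    qed
    have kl_ne: "k \<noteq> l" using kl U0 by auto
    have apos: "k0 * cos (th j s - th i s) + k1 > 0" if s: "0 \<le> s" "s < T" for s i j
    proof -
      have ca: "cos \<bar>y\<bar> = cos y" for y :: real by (cases "y \<ge> 0") auto
      have "cos (th j s - th i s) = cos \<bar>th j s - th i s\<bar>" by (rule ca[symmetric])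
      moreover have "cos U \<le> cos \<bar>th j s - th i s\<bar>"
        using good[OF s, of j i] Upi by (intro cos_monotone_0_pi_le) auto
      ultimately have "k0 * cos U \<le> k0 * cos (th j s - th i s)" using k0 by (simp add: mult_left_mono)
      with cpl show ?thesis by simp
    qed
    have Dnn: "Dis s \<ge> 0" if s: "0 \<le> s" "s < T" for s
      unfolding Dis_def using apos[OF s] NN_pos
      by (intro mult_nonneg_nonneg sum_nonneg) (auto intro: less_imp_le)
    have contEn: "continuous_on {p..q} En" if "0 \<le> p" "q \<le> T" for p q
    proof -
      have S: "{p..q} \<subseteq> Iv" unfolding Iv_def using that bT ere by auto
      show ?thesis unfolding En_def energy_def
        by (intro continuous_intros cont_th cont_om S)
    qed
    have mono: "En q \<le> En p" if pq: "0 \<le> p" "p \<le> q" "q \<le> T" for p q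
    proof (rule rderiv_nonincr[OF pq(2) contEn[OF pq(1,3)]])
      fix s assume s: "p \<le> s" "s < q"
      have sI: "s \<in> Iv" unfolding Iv_def using s pq ere[of s T, OF _ bT] by auto
      have bq: "ereal q < tau" using ere[OF pq(3) bT] .
      show "\<exists>d\<le>0. (En has_real_derivative d) (at s within {s..q})"
        using En_deriv[OF sI s(2) bq] Dnn[of s] s pq by (intro exI[of _ "- Dis s"]) auto
    qed
    have ET: "En T \<le> E0" using mono[of 0 T] T0 E0 by simp
    have E0nn: "E0 \<ge> 0" unfolding E0_def energy_def using k2
      by (intro add_nonneg_nonneg mult_nonneg_nonneg sum_nonneg) auto
    define r where "r = sqrt (2 * NN * E0 / k2)"
    define M where "M = Max {thinf i j | i j. i \<noteq> j}"
    have Ueq: "U = M + r" unfolding U_def Ucal_def r_def NN_def M_def ..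
    have finM: "finite {thinf i j | i j. i \<noteq> j}"
    proof (rule finite_subset[of _ "(\<lambda>(i, j). thinf i j) ` UNIV"])
      show "{thinf i j | i j. i \<noteq> j} \<subseteq> (\<lambda>(i, j). thinf i j) ` UNIV" by auto
    qed simp
    have cM: "thinf k l \<le> M" unfolding M_def using kl_ne by (intro Max_ge finM) auto
    have r0: "r \<ge> 0" unfolding r_def using E0nn k2 NN_pos by simp
    have r2: "r^2 = 2 * NN * E0 / k2" unfolding r_def using E0nn k2 NN_pos by simp
    define pot where "pot i j = (\<bar>th j T - th i T\<bar> - thinf i j)^2" for i j
    have potkl: "pot k l \<ge> 2 * NN * E0 / k2"
    proof -
      have "r \<le> \<bar>th l T - th k T\<bar> - thinf k l"
        using kl cM Ueq by (simp add: abs_minus_commute)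
      hence "r^2 \<le> (\<bar>th l T - th k T\<bar> - thinf k l)^2" using r0 by (intro power_mono) auto
      then show ?thesis unfolding pot_def r2 .
    qed
    have potlk: "pot l k = pot k l" unfolding pot_def by (simp add: abs_minus_commute symm)
    have pot_nn: "pot i j \<ge> 0" for i j unfolding pot_def by simp
    have sumpot: "(\<Sum>i\<in>UNIV. \<Sum>j\<in>UNIV. pot i j) \<ge> pot k l + pot l k"
    proof -
      have "pot k l + pot l k = (\<Sum>i\<in>{k, l}. pot i (if i = k then l else k))"
        using kl_ne by simp
      also have "\<dots> \<le> (\<Sum>i\<in>{k, l}. \<Sum>j\<in>UNIV. pot i j)"
        by (intro sum_mono member_le_sum pot_nn) auto
      also have "\<dots> \<le> (\<Sum>i\<in>UNIV. \<Sum>j\<in>UNIV. pot i j)"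
        by (intro sum_mono2 sum_nonneg pot_nn) auto
      finally show ?thesis .
    qed
    have "En T \<ge> k2 / (4 * NN) * (\<Sum>i\<in>UNIV. \<Sum>j\<in>UNIV. pot i j)"
      unfolding En_def energy_def pot_def NN_def by (simp add: sum_nonneg)
    moreover have "k2 / (4 * NN) * (\<Sum>i\<in>UNIV. \<Sum>j\<in>UNIV. pot i j) \<ge> k2 / (4 * NN) * (2 * (2 * NN * E0 / k2))"
      using sumpot potkl potlk k2 NN_pos by (intro mult_left_mono) auto
    moreover have "k2 / (4 * NN) * (2 * (2 * NN * E0 / k2)) = E0" using k2 NN_pos by (simp add: field_simps)
    ultimately have ETe: "En T = E0" using ET by linarith
    have const: "En s = E0" if "0 \<le> s" "s \<le> T" for s
      using mono[of s T] mono[of 0 s] that ETe E0 by simp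
    have Dz: "Dis s = 0" if s: "0 \<le> s" "s < T" for s
    proof -
      have sI: "s \<in> Iv" unfolding Iv_def using s ere[of s T, OF _ bT] by auto
      have d1: "(En has_real_derivative - Dis s) (at s within {s..T})" by (rule En_deriv[OF sI s(2) bT])
      have d2: "(En has_real_derivative 0) (at s within {s..T})"
        by (rule has_field_derivative_transform_within[OF DERIV_const[of E0] zero_less_one])
           (use s const in auto)
      show ?thesis using deriv_unique_right[OF s(2) d1 d2] by simp
    qed
    have wz: "om l s = om k s" if s: "0 \<le> s" "s < T" for s
    proof -
      have "(\<Sum>i\<in>UNIV. \<Sum>j\<in>UNIV. (k0 * cos (th j s - th i s) + k1) * (om j s - om i s)^2) = 0"
        using Dz[OF s] NN_pos unfolding Dis_def by simp
      moreover have nn: "\<And>i j. (k0 * cos (th j s - th i s) + k1) * (om j s - om i s)^2 \<ge> 0"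
        using apos[OF s] by (simp add: less_imp_le)
      ultimately have "\<forall>i. (\<Sum>j\<in>UNIV. (k0 * cos (th j s - th i s) + k1) * (om j s - om i s)^2) = 0"
        by (subst (asm) sum_nonneg_eq_0_iff) (auto intro: sum_nonneg)
      hence "(k0 * cos (th l s - th k s) + k1) * (om l s - om k s)^2 = 0"
        using nn by (simp add: sum_nonneg_eq_0_iff)
      then show ?thesis using apos[OF s, of l k] apos[OF s, of k l] by auto
    qed
    have xc: "continuous_on {0..T} (\<lambda>t. th l t - th k t)"
    proof -
      have S: "{0..T} \<subseteq> Iv" unfolding Iv_def using bT ere by auto
      show ?thesis by (intro continuous_intros cont_th S)
    qed
    have xd: "((\<lambda>t. th l t - th k t) has_real_derivative 0) (at t)" if t: "0 < t" "t < T" for t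
    proof -
      have tI: "t \<in> Iv" unfolding Iv_def using t ere[of t T, OF _ bT] by auto
      have 0: "(0::real) \<in> Iv" unfolding Iv_def using tau by (simp add: zero_ereal_def)
      have "((\<lambda>t. th l t - th k t) has_real_derivative om l t - om k t) (at t within Iv)"
        by (intro DERIV_diff dth tI)
      then show ?thesis using wz[of t] t at_int[OF 0 bT t] by simp
    qed
    obtain l' z where z: "0 < z" "z < T" "((\<lambda>t. th l t - th k t) has_real_derivative l') (at z)"
      "(th l T - th k T) - (th l 0 - th k 0) = (T - 0) * l'"
      using MVT[OF Tpos xc] xd real_differentiable_def by blast
    have "l' = 0" using DERIV_unique[OF z(3) xd[OF z(1,2)]] .
    with z have "th l T - th k T = th l 0 - th k 0" by simp
    hence "\<bar>th k T - th l T\<bar> = \<bar>th k 0 - th l 0\<bar>" by (simp add: abs_minus_commute)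
    with kl g0[of k l] show False by simp
  qed
  show ?thesis using main unfolding U_def E0_def .
qed

end
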